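(* For every environment $\mu$, $$\sum_{a\in Z(\mu)}\beta(a)=|\mathcal A|.$$
   Context: Game tree: $V$ is the node set of a finite rooted tree with root $r$ and leaf set $L$; $C(v)$ denotes the set of children of $v$ and $p(v)$ the parent of $v\ne r$. The internal nodes are partitioned into infosets $N$ and actions $\mathcal A$ with $r\in N$, $C(v)\subseteq\mathcal A$ and $|C(v)|>1$ for $v\in N$, and $C(a)\subseteq N\cup L$ for $a\in\mathcal A$. An environment is a map $\mu:\mathcal A\to V$ with $\mu(a)\in C(a)$ for all $a$. For an environment $\mu$, $V(\mu)$ is the smallest subset of $V$ containing $r$, containing $C(v)$ for each $v\in N\cap V(\mu)$, and containing $\mu(a)$ for each $a\in\mathcal A\cap V(\mu)$. $Z(\mu)$ is the set of all $a\in\mathcal A\cap V(\mu)$ with $\mu(a)\in L$. Define $m:N\cup\mathcal A\to\mathbb N$ recursively from the bottom by $m(a)=1+\sum_{v\in C(a)\cap N}m(v)$ for $a\in\mathcal A$ and $m(v)=\sum_{a\in C(v)}m(a)$ for $v\in N$. Define $\beta$ from the top by $\beta(r)=1$, $\beta(a)=m(a)\beta(p(a))$ for $a\in\mathcal A$, $\beta(v)=\beta(p(v))/m(v)$ for $v\in N\setminus\{r\}$. *)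

theory Defs
  imports Complex_Main
begin

text \<open>A finite rooted tree: node set V (finite), root r, parent map p.
  Children of v: the non-root nodes of V whose parent is v.\<close>

definition children :: "'v set \<Rightarrow> 'v \<Rightarrow> ('v \<Rightarrow> 'v) \<Rightarrow> 'v \<Rightarrow> 'v set" where
  "children V r p v = {w \<in> V. w \<noteq> r \<and> p w = v}"

definition leaves :: "'v set \<Rightarrow> 'v \<Rightarrow> ('v \<Rightarrow> 'v) \<Rightarrow> 'v set" where
  "leaves V r p = {v \<in> V. children V r p v = {}}"

definition game_tree ::
  "'v set \<Rightarrow> 'v \<Rightarrow> ('v \<Rightarrow> 'v) \<Rightarrow> 'v set \<Rightarrow> 'v set \<Rightarrow> bool" where
  "game_tree V r p N A \<longleftrightarrow>
     finite V \<and> r \<in> V \<and>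
     (\<forall>v\<in>V - {r}. p v \<in> V) \<and>
     (\<forall>v\<in>V. \<exists>k. (p ^^ k) v = r) \<and>
     N \<inter> A = {} \<and>
     N \<union> A = {v \<in> V. children V r p v \<noteq> {}} \<and>
     r \<in> N \<and>
     (\<forall>v\<in>N. children V r p v \<subseteq> A \<and> card (children V r p v) > 1) \<and>
     (\<forall>a\<in>A. children V r p a \<subseteq> N \<union> leaves V r p)"

definition environment ::
  "'v set \<Rightarrow> 'v \<Rightarrow> ('v \<Rightarrow> 'v) \<Rightarrow> 'v set \<Rightarrow> ('v \<Rightarrow> 'v) \<Rightarrow> bool" where
  "environment V r p A \<mu> \<longleftrightarrow> (\<forall>a\<in>A. \<mu> a \<in> children V r p a)"

inductive_set Vmu ::
  "'v set \<Rightarrow> 'v \<Rightarrow> ('v \<Rightarrow> 'v) \<Rightarrow> 'v set \<Rightarrow> 'v set \<Rightarrow> ('v \<Rightarrow> 'v) \<Rightarrow> 'v set"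
  for V r p N A \<mu> where
  root: "r \<in> Vmu V r p N A \<mu>"
| info: "v \<in> Vmu V r p N A \<mu> \<Longrightarrow> v \<in> N \<Longrightarrow> w \<in> children V r p v \<Longrightarrow> w \<in> Vmu V r p N A \<mu>"
| act:  "a \<in> Vmu V r p N A \<mu> \<Longrightarrow> a \<in> A \<Longrightarrow> \<mu> a \<in> Vmu V r p N A \<mu>"

definition Zmu ::
  "'v set \<Rightarrow> 'v \<Rightarrow> ('v \<Rightarrow> 'v) \<Rightarrow> 'v set \<Rightarrow> 'v set \<Rightarrow> ('v \<Rightarrow> 'v) \<Rightarrow> 'v set" where
  "Zmu V r p N A \<mu> = {a \<in> A \<inter> Vmu V r p N A \<mu>. \<mu> a \<in> leaves V r p}"

text \<open>The bottom-up recursion for m, with a fuel parameter (the height of the tree is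
  less than card V, so fuel card V suffices).\<close>
fun m_aux :: "'v set \<Rightarrow> 'v \<Rightarrow> ('v \<Rightarrow> 'v) \<Rightarrow> 'v set \<Rightarrow> 'v set \<Rightarrow> nat \<Rightarrow> 'v \<Rightarrow> nat" where
  "m_aux V r p N A 0 x = 0"
| "m_aux V r p N A (Suc k) x =
     (if x \<in> A then 1 + (\<Sum>v\<in>children V r p x \<inter> N. m_aux V r p N A k v)
      else (\<Sum>a\<in>children V r p x. m_aux V r p N A k a))"

definition mfun :: "'v set \<Rightarrow> 'v \<Rightarrow> ('v \<Rightarrow> 'v) \<Rightarrow> 'v set \<Rightarrow> 'v set \<Rightarrow> 'v \<Rightarrow> nat" where
  "mfun V r p N A x = m_aux V r p N A (card V) x"

text \<open>The top-down recursion for beta, with fuel (depth is less than card V).\<close>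
fun beta_aux :: "'v set \<Rightarrow> 'v \<Rightarrow> ('v \<Rightarrow> 'v) \<Rightarrow> 'v set \<Rightarrow> 'v set \<Rightarrow> nat \<Rightarrow> 'v \<Rightarrow> real" where
  "beta_aux V r p N A 0 x = 0"
| "beta_aux V r p N A (Suc k) x =
     (if x = r then 1
      else if x \<in> A then real (mfun V r p N A x) * beta_aux V r p N A k (p x)
      else if x \<in> N then beta_aux V r p N A k (p x) / real (mfun V r p N A x)
      else 0)"

definition beta :: "'v set \<Rightarrow> 'v \<Rightarrow> ('v \<Rightarrow> 'v) \<Rightarrow> 'v set \<Rightarrow> 'v set \<Rightarrow> 'v \<Rightarrow> real" where
  "beta V r p N A x = beta_aux V r p N A (card V) x"

end

theory Submission
  imports Defs
begin

locale gt =
  fixes V :: "'v set" and r :: 'v and p :: "'v \<Rightarrow> 'v" and N A :: "'v set"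
  assumes G: "game_tree V r p N A"
begin

abbreviation C where "C x \<equiv> children V r p x"

definition dep :: "'v \<Rightarrow> nat" where "dep x = (LEAST k. (p ^^ k) x = r)"

lemma finV: "finite V" and rV: "r \<in> V" and pV: "\<And>v. v \<in> V \<Longrightarrow> v \<noteq> r \<Longrightarrow> p v \<in> V"
  and reach: "\<And>v. v \<in> V \<Longrightarrow> \<exists>k. (p ^^ k) v = r"
  and disj: "N \<inter> A = {}" and NA: "N \<union> A = {v \<in> V. C v \<noteq> {}}"
  and rN: "r \<in> N" and Nch: "\<And>v. v \<in> N \<Longrightarrow> C v \<subseteq> A \<and> card (C v) > 1"
  and Ach: "\<And>a. a \<in> A \<Longrightarrow> C a \<subseteq> N \<union> leaves V r p"
  using G unfolding game_tree_def by auto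

lemma dep1: "x \<in> V \<Longrightarrow> (p ^^ dep x) x = r"
  unfolding dep_def using reach by (metis (mono_tags, lifting) LeastI_ex)

lemma dep_min: "(p ^^ k) x = r \<Longrightarrow> dep x \<le> k"
  unfolding dep_def by (rule Least_le)

lemma dep2: assumes "x \<in> V" "x \<noteq> r" shows "dep x = Suc (dep (p x))"
proof -
  have px: "p x \<in> V" using assms pV by auto
  have "dep x \<noteq> 0" using dep1[OF assms(1)] assms(2) by (metis funpow_0)
  then obtain j where j: "dep x = Suc j" by (cases "dep x") auto
  have "(p ^^ j) (p x) = r" using dep1[OF assms(1)] j by (simp add: funpow_Suc_right del: funpow.simps)
  hence "dep (p x) \<le> j" by (rule dep_min)
  moreover have "(p ^^ Suc (dep (p x))) x = r" using dep1[OF px]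
    by (simp add: funpow_Suc_right del: funpow.simps)
  hence "dep x \<le> Suc (dep (p x))" by (rule dep_min)
  ultimately show ?thesis using j by simp
qed

lemma anc_V: "x \<in> V \<Longrightarrow> i \<le> dep x \<Longrightarrow> (p ^^ i) x \<in> V"
proof (induction i)
  case 0 then show ?case by simp
next
  case (Suc i)
  have "(p ^^ i) x \<noteq> r" using dep_min[of i x] Suc.prems by auto
  then show ?case using Suc pV by auto
qed

lemma dep_lt: assumes "x \<in> V" shows "dep x < card V"
proof -
  have inj: "inj_on (\<lambda>i. (p ^^ i) x) {..dep x}"
  proof (rule inj_onI, rule ccontr)
    fix i j assume i: "i \<in> {..dep x}" and j: "j \<in> {..dep x}" and e: "(p ^^ i) x = (p ^^ j) x" and ne: "i \<noteq> j"
    { fix i j assume ij: "i < j" "j \<le> dep x" and e: "(p ^^ i) x = (p ^^ j) x"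
      have "(p ^^ (dep x - j + i)) x = (p ^^ (dep x - j)) ((p ^^ i) x)" by (simp add: funpow_add)
      also have "\<dots> = (p ^^ (dep x - j)) ((p ^^ j) x)" using e by simp
      also have "\<dots> = (p ^^ dep x) x" using ij by (metis funpow_add comp_apply le_add_diff_inverse2)
      also have "\<dots> = r" using dep1[OF assms] .
      finally have "dep x \<le> dep x - j + i" by (rule dep_min)
      hence False using ij by simp }
    then show False using i j e ne by (metis atMost_iff linorder_neqE_nat)
  qed
  have "(\<lambda>i. (p ^^ i) x) ` {..dep x} \<subseteq> V" using anc_V assms by auto
  hence "card ((\<lambda>i. (p ^^ i) x) ` {..dep x}) \<le> card V" using finV by (simp add: card_mono)
  thus ?thesis using card_image[OF inj] by simp
qed

lemma child_V: "c \<in> C x \<Longrightarrow> c \<in> V \<and> c \<noteq> r \<and> p c = x"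
  unfolding children_def by auto

lemma child_dep: "c \<in> C x \<Longrightarrow> dep c = Suc (dep x)"
  using child_V dep2 by metis


lemma fin_C: "finite (C x)"
  using finV by (rule rev_finite_subset) (auto simp: children_def)

lemma m_aux_stable: "x \<in> V \<Longrightarrow> card V - dep x \<le> k \<Longrightarrow> card V - dep x \<le> k' \<Longrightarrow>
   m_aux V r p N A k x = m_aux V r p N A k' x"
proof (induction k arbitrary: x k')
  case 0 then show ?case using dep_lt[OF 0(1)] by simp
next
  case (Suc j)
  then obtain j' where k': "k' = Suc j'" using dep_lt[OF Suc(2)] by (cases k') auto
  have IH: "m_aux V r p N A j c = m_aux V r p N A j' c" if "c \<in> C x" for c
    using Suc.IH[of c j'] child_V[OF that] child_dep[OF that] Suc.prems k' by simp
  show ?case unfolding k' using IH by (auto intro!: sum.cong)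
qed

lemma mfun_eq: assumes "x \<in> V" shows "mfun V r p N A x =
  (if x \<in> A then 1 + (\<Sum>c\<in>C x \<inter> N. mfun V r p N A c) else (\<Sum>c\<in>C x. mfun V r p N A c))"
proof -
  obtain j where j: "card V = Suc j" using dep_lt[OF assms] by (cases "card V") auto
  have e: "m_aux V r p N A j c = mfun V r p N A c" if "c \<in> C x" for c
    unfolding mfun_def using m_aux_stable[of c j "card V"] child_V[OF that] child_dep[OF that] j by simp
  have "mfun V r p N A x = m_aux V r p N A (Suc j) x" by (simp only: mfun_def j)
  also have "\<dots> = (if x \<in> A then 1 + (\<Sum>c\<in>C x \<inter> N. m_aux V r p N A j c) else (\<Sum>c\<in>C x. m_aux V r p N A j c))"
    by (simp only: m_aux.simps)
  also have "\<dots> = (if x \<in> A then 1 + (\<Sum>c\<in>C x \<inter> N. mfun V r p N A c) else (\<Sum>c\<in>C x. mfun V r p N A c))"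
    using e by (auto intro!: sum.cong)
  finally show ?thesis .
qed

lemma beta_aux_stable: "x \<in> V \<Longrightarrow> dep x < k \<Longrightarrow> dep x < k' \<Longrightarrow>
   beta_aux V r p N A k x = beta_aux V r p N A k' x"
proof (induction k arbitrary: x k')
  case 0 then show ?case by simp
next
  case (Suc j)
  then obtain j' where k': "k' = Suc j'" by (cases k') auto
  show ?case
  proof (cases "x = r")
    case True then show ?thesis unfolding k' by simp
  next
    case False
    have "beta_aux V r p N A j (p x) = beta_aux V r p N A j' (p x)"
      using Suc.IH[of "p x" j'] pV[OF Suc(2) False] dep2[OF Suc(2) False] Suc.prems k' by simp
    then show ?thesis unfolding k' by simp
  qed
qed

lemma beta_eq: assumes "x \<in> V" shows "beta V r p N A x =
  (if x = r then 1 else if x \<in> A then real (mfun V r p N A x) * beta V r p N A (p x)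
   else if x \<in> N then beta V r p N A (p x) / real (mfun V r p N A x) else 0)"
proof -
  obtain j where j: "card V = Suc j" using dep_lt[OF assms] by (cases "card V") auto
  have e: "beta_aux V r p N A j (p x) = beta V r p N A (p x)" if "x \<noteq> r"
    unfolding beta_def using beta_aux_stable[of "p x" j "card V"] pV[OF assms that]
      dep2[OF assms that] dep_lt[OF assms] j by simp
  have "beta V r p N A x = beta_aux V r p N A (Suc j) x" by (simp only: beta_def j)
  also have "\<dots> = (if x = r then 1 else if x \<in> A then real (mfun V r p N A x) * beta_aux V r p N A j (p x)
   else if x \<in> N then beta_aux V r p N A j (p x) / real (mfun V r p N A x) else 0)"
    by (simp only: beta_aux.simps)
  also have "\<dots> = (if x = r then 1 else if x \<in> A then real (mfun V r p N A x) * beta V r p N A (p x)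
   else if x \<in> N then beta V r p N A (p x) / real (mfun V r p N A x) else 0)"
    using e by auto
  finally show ?thesis .
qed

lemma NV: "N \<subseteq> V" and AV: "A \<subseteq> V" using NA by auto

lemma leaf_not: "x \<in> leaves V r p \<Longrightarrow> x \<notin> N \<and> x \<notin> A"
  using NA unfolding leaves_def by blast

lemma A_par: assumes "a \<in> A" shows "a \<noteq> r \<and> p a \<in> N \<and> a \<in> C (p a)"
proof -
  have a: "a \<in> V" "a \<noteq> r" using assms AV rN disj by auto
  have pa: "p a \<in> V" using pV a by auto
  have ac: "a \<in> C (p a)" using a pa unfolding children_def by auto
  have "p a \<in> N \<union> A" using NA pa ac by blast
  moreover have "p a \<notin> A"
  proof
    assume "p a \<in> A"
    hence "a \<in> N \<union> leaves V r p" using Ach ac by blast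
    thus False using assms disj leaf_not by blast
  qed
  ultimately show ?thesis using a ac by auto
qed

lemma N_par: assumes "v \<in> N" "v \<noteq> r" shows "p v \<in> A \<and> v \<in> C (p v)"
proof -
  have a: "v \<in> V" using assms NV by auto
  have pa: "p v \<in> V" using pV a assms by auto
  have ac: "v \<in> C (p v)" using a pa assms unfolding children_def by auto
  have "p v \<in> N \<union> A" using NA pa ac by blast
  moreover have "p v \<notin> N" using Nch ac assms disj by blast
  ultimately show ?thesis using ac by auto
qed

lemma m_pos: "x \<in> N \<union> A \<Longrightarrow> mfun V r p N A x \<ge> 1"
proof -
  assume x: "x \<in> N \<union> A"
  show ?thesis
  proof (cases "x \<in> A")
    case True then show ?thesis using mfun_eq AV by auto
  next
    case False
    hence xN: "x \<in> N" using x by auto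
    have ne: "C x \<noteq> {}" using Nch[OF xN] by (metis card.empty not_less_zero)
    then obtain c where c: "c \<in> C x" by auto
    have cA: "c \<in> A" using Nch[OF xN] c by auto
    have "1 \<le> mfun V r p N A c" using mfun_eq AV cA by auto
    also have "\<dots> \<le> (\<Sum>c\<in>C x. mfun V r p N A c)" using c fin_C by (rule_tac member_le_sum) auto
    finally show ?thesis using mfun_eq NV xN False by auto
  qed
qed

lemma m_root: "mfun V r p N A r = card A"
proof -
  let ?m = "mfun V r p N A"
  have finN: "finite N" and finA: "finite A" using finV NV AV finite_subset by auto
  have CN: "C v = {a \<in> A. p a = v}" if "v \<in> N" for v
    using Nch[OF that] child_V AV A_par by blast
  have s1: "(\<Sum>v\<in>N. ?m v) = (\<Sum>a\<in>A. ?m a)"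
  proof -
    have "(\<Sum>v\<in>N. ?m v) = (\<Sum>v\<in>N. \<Sum>a\<in>{a \<in> A. p a = v}. ?m a)"
    proof (rule sum.cong)
      fix v assume v: "v \<in> N"
      have "v \<notin> A" using v disj by auto
      thus "?m v = (\<Sum>a\<in>{a \<in> A. p a = v}. ?m a)" using mfun_eq[of v] v NV CN[OF v] by auto
    qed simp
    also have "\<dots> = (\<Sum>a\<in>A. ?m a)" using finA finN A_par by (intro sum.group) auto
    finally show ?thesis .
  qed
  have CA: "C a \<inter> N = {w \<in> N - {r}. p w = a}" for a
    using child_V NV unfolding children_def by auto
  have s2: "(\<Sum>a\<in>A. ?m a) = card A + (\<Sum>w\<in>N - {r}. ?m w)"
  proof -
    have "(\<Sum>a\<in>A. ?m a) = (\<Sum>a\<in>A. 1 + (\<Sum>w\<in>{w \<in> N - {r}. p w = a}. ?m w))"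
      using mfun_eq AV CA by (intro sum.cong) auto
    also have "\<dots> = card A + (\<Sum>a\<in>A. \<Sum>w\<in>{w \<in> N - {r}. p w = a}. ?m w)"
      by (simp only: sum.distrib) simp
    also have "(\<Sum>a\<in>A. \<Sum>w\<in>{w \<in> N - {r}. p w = a}. ?m w) = (\<Sum>w\<in>N - {r}. ?m w)"
      using finN finA N_par by (intro sum.group) auto
    finally show ?thesis .
  qed
  have "(\<Sum>v\<in>N. ?m v) = ?m r + (\<Sum>w\<in>N - {r}. ?m w)"
    using finN rN by (simp add: sum.remove)
  thus ?thesis using s1 s2 by simp
qed


context
  fixes \<mu> assumes E: "environment V r p A \<mu>"
begin

abbreviation W where "W \<equiv> Vmu V r p N A \<mu>"

lemma mu_C: "a \<in> A \<Longrightarrow> \<mu> a \<in> C a" using E unfolding environment_def by auto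

lemma W_V: "x \<in> W \<Longrightarrow> x \<in> V"
  by (induction rule: Vmu.induct) (auto simp: rV dest: child_V mu_C)

lemma W_inv: assumes "v \<in> W" "v \<noteq> r"
  shows "(p v \<in> W \<and> p v \<in> N) \<or> (p v \<in> W \<and> p v \<in> A \<and> v = \<mu> (p v))"
  using assms(1)
proof (cases rule: Vmu.cases)
  case root then show ?thesis using assms by simp
next
  case (info w) then show ?thesis using child_V by auto
next
  case (act a) then show ?thesis using child_V[OF mu_C] by auto
qed

lemma main_sum: "(\<Sum>a\<in>Zmu V r p N A \<mu>. beta V r p N A a) = real (card A)"
proof -
  let ?m = "mfun V r p N A" and ?b = "beta V r p N A"
  have "W \<subseteq> V" using W_V by blast
  hence finW: "finite W" using finV by (rule finite_subset)
  define AW where "AW = A \<inter> W"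
  define NW where "NW = N \<inter> W"
  define Z where "Z = {a \<in> AW. \<mu> a \<in> leaves V r p}"
  define Y where "Y = {a \<in> AW. \<mu> a \<in> N}"
  have finAW: "finite AW" and finNW: "finite NW" using finW AW_def NW_def by auto
  have NL: "\<mu> a \<in> N \<or> \<mu> a \<in> leaves V r p" if "a \<in> A" for a
    using Ach[OF that] mu_C[OF that] by blast
  have ZY: "AW = Z \<union> Y" "Z \<inter> Y = {}"
    using NL leaf_not unfolding Z_def Y_def AW_def by auto
  have finZ: "finite Z" and finY: "finite Y" using ZY finAW by auto
  have Zeq: "Zmu V r p N A \<mu> = Z" unfolding Zmu_def Z_def AW_def by simp
  have s1: "(\<Sum>a\<in>AW. ?b a) = (\<Sum>a\<in>Z. ?b a) + (\<Sum>a\<in>Y. ?b a)"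
    using ZY finZ finY by (simp add: sum.union_disjoint)
  have pAW: "p ` AW \<subseteq> NW"
  proof
    fix v assume "v \<in> p ` AW"
    then obtain a where a: "a \<in> AW" "v = p a" by auto
    have "p a \<in> N" using A_par a unfolding AW_def by auto
    moreover have "p a \<in> W" using W_inv[of a] A_par a disj unfolding AW_def by auto
    ultimately show "v \<in> NW" using a NW_def by auto
  qed
  have CNW: "C v = {a \<in> AW. p a = v}" if "v \<in> NW" for v
  proof -
    have vN: "v \<in> N" "v \<in> W" using that unfolding NW_def by auto
    have CW: "C v \<subseteq> W" using Vmu.info[OF vN(2) vN(1)] by (rule subsetI)
    have "C v \<subseteq> {a \<in> AW. p a = v}" using CW Nch[OF vN(1)] by (auto simp: AW_def children_def)
    moreover have "{a \<in> AW. p a = v} \<subseteq> C v"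
    proof
      fix a assume "a \<in> {a \<in> AW. p a = v}"
      hence "a \<in> A" "p a = v" by (auto simp: AW_def)
      thus "a \<in> C v" using A_par[of a] by simp
    qed
    ultimately show ?thesis by blast
  qed
  have s2: "(\<Sum>a\<in>AW. ?b a) = (\<Sum>v\<in>NW. ?m v * ?b v)"
  proof -
    have "(\<Sum>a\<in>AW. ?b a) = (\<Sum>v\<in>NW. \<Sum>a\<in>{a \<in> AW. p a = v}. ?b a)"
      using finAW finNW pAW by (intro sum.group[symmetric]) auto
    also have "\<dots> = (\<Sum>v\<in>NW. ?m v * ?b v)"
    proof (rule sum.cong)
      fix v assume v: "v \<in> NW"
      have vN: "v \<in> N" "v \<notin> A" "v \<in> V" using v disj NV unfolding NW_def by auto
      have "(\<Sum>a\<in>{a \<in> AW. p a = v}. ?b a) = (\<Sum>a\<in>C v. ?m a * ?b v)"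
      proof (rule sum.cong)
        fix a assume "a \<in> C v"
        thus "?b a = ?m a * ?b v" using beta_eq[of a] child_V Nch vN by auto
      qed (simp add: CNW[OF v])
      also have "\<dots> = (\<Sum>a\<in>C v. ?m a) * ?b v" by (simp add: sum_distrib_right)
      also have "(\<Sum>a\<in>C v. ?m a) = ?m v" using mfun_eq[of v] vN by simp
      finally show "(\<Sum>a\<in>{a \<in> AW. p a = v}. ?b a) = ?m v * ?b v" by simp
    qed simp
    finally show ?thesis .
  qed
  have rNW: "r \<in> NW" using rN Vmu.root unfolding NW_def by simp
  have s3: "(\<Sum>v\<in>NW. ?m v * ?b v) = ?m r + (\<Sum>v\<in>NW - {r}. ?m v * ?b v)"
  proof -
    have "?b r = 1" using beta_eq[of r] rV by simp
    thus ?thesis using finNW rNW by (simp add: sum.remove)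
  qed
  have inj: "inj_on \<mu> Y"
  proof (rule inj_onI)
    fix x y assume "x \<in> Y" "y \<in> Y" "\<mu> x = \<mu> y"
    hence "x \<in> A" "y \<in> A" "\<mu> x = \<mu> y" unfolding Y_def AW_def by auto
    thus "x = y" using child_V[OF mu_C[OF \<open>x \<in> A\<close>]] child_V[OF mu_C[OF \<open>y \<in> A\<close>]] by metis
  qed
  have img: "\<mu> ` Y = NW - {r}"
  proof
    show "\<mu> ` Y \<subseteq> NW - {r}"
    proof
      fix v assume "v \<in> \<mu> ` Y"
      then obtain a where a: "a \<in> A" "a \<in> W" "\<mu> a \<in> N" "v = \<mu> a" unfolding Y_def AW_def by auto
      have "\<mu> a \<in> W" using Vmu.act[OF a(2) a(1)] .
      moreover have "\<mu> a \<noteq> r" using child_V[OF mu_C[OF a(1)]] by simp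
      ultimately show "v \<in> NW - {r}" using a unfolding NW_def by auto
    qed
  next
    show "NW - {r} \<subseteq> \<mu> ` Y"
    proof
      fix v assume v: "v \<in> NW - {r}"
      have "p v \<in> A" using N_par v unfolding NW_def by auto
      hence "p v \<notin> N" using disj by auto
      hence "p v \<in> W \<and> p v \<in> A \<and> v = \<mu> (p v)" using W_inv[of v] v unfolding NW_def by auto
      hence "p v \<in> Y" using v unfolding Y_def AW_def NW_def by auto
      thus "v \<in> \<mu> ` Y" using \<open>p v \<in> W \<and> p v \<in> A \<and> v = \<mu> (p v)\<close> by (metis image_eqI)
    qed
  qed
  have s4: "(\<Sum>v\<in>NW - {r}. ?m v * ?b v) = (\<Sum>a\<in>Y. ?b a)"
  proof -
    have "(\<Sum>v\<in>NW - {r}. ?m v * ?b v) = (\<Sum>a\<in>Y. ?m (\<mu> a) * ?b (\<mu> a))"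
      using sum.reindex[OF inj, of "\<lambda>v. ?m v * ?b v"] img by simp
    also have "\<dots> = (\<Sum>a\<in>Y. ?b a)"
    proof (rule sum.cong)
      fix a assume a: "a \<in> Y"
      have aA: "a \<in> A" using a unfolding Y_def AW_def by auto
      have w: "\<mu> a \<in> N" "\<mu> a \<notin> A" "\<mu> a \<noteq> r" "p (\<mu> a) = a" "\<mu> a \<in> V"
        using a disj child_V[OF mu_C[OF aA]] unfolding Y_def by auto
      have pos: "real (?m (\<mu> a)) \<noteq> 0" using m_pos[of "\<mu> a"] w by auto
      show "?m (\<mu> a) * ?b (\<mu> a) = ?b a" using beta_eq[of "\<mu> a"] w pos by simp
    qed simp
    finally show ?thesis .
  qed
  have "(\<Sum>a\<in>Z. ?b a) = real (?m r)" using s1 s2 s3 s4 by simp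
  thus ?thesis using Zeq m_root by simp
qed

end
end

theorem mainTheorem5:
  fixes V N A :: "'v set" and r :: 'v and p \<mu> :: "'v \<Rightarrow> 'v"
  assumes "game_tree V r p N A"
    and "environment V r p A \<mu>"
  shows "(\<Sum>a\<in>Zmu V r p N A \<mu>. beta V r p N A a) = real (card A)"
proof -
  interpret gt V r p N A using assms(1) by unfold_locales
  show ?thesis using main_sum[OF assms(2)] .
qed

end
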